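(* A connected graph $G$ is Ricci-flat and has girth $g(G)\ge 5$ if and only if $G$ is one of the following: the path $P_n$ ($n\ge 2$), the infinite ray, the infinite (two-sided) path, the cycle $C_n$ ($n\ge 5$), or the star graph $T_n$ ($n\ge 3$).
   Context: Graphs are locally finite and unweighted; the girth is the length of a shortest cycle (infinite for trees). $d_G$ is the shortest-path metric, $N_G(v)$ the neighbour set and $d_v$ the degree of $v$; $m_v$ is the uniform probability measure on $N_G(v)$, and for an edge $(x,y)$, $\kappa(x,y)=1-W_1(m_x,m_y)$, where $W_1$ is the Wasserstein-1 (transportation) distance with respect to $d_G$. $G$ is Ricci-flat if $\kappa(x,y)=0$ for every edge $(x,y)\in E(G)$. $P_n$ is the path on $n$ vertices, $C_n$ the cycle on $n$ vertices, and the star $T_n$ is a tree with one central vertex adjacent to all other vertices, which are leaves. *)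

theory Defs
  imports Complex_Main "HOL-Library.Extended_Nat"
begin

definition graph :: "'a set \<Rightarrow> ('a \<Rightarrow> 'a \<Rightarrow> bool) \<Rightarrow> bool" where
  "graph V E \<longleftrightarrow> (\<forall>x y. E x y \<longrightarrow> x \<in> V \<and> y \<in> V \<and> E y x \<and> x \<noteq> y)"

definition nbrs :: "('a \<Rightarrow> 'a \<Rightarrow> bool) \<Rightarrow> 'a \<Rightarrow> 'a set" where
  "nbrs E v = {u. E v u}"

definition locally_finite :: "'a set \<Rightarrow> ('a \<Rightarrow> 'a \<Rightarrow> bool) \<Rightarrow> bool" where
  "locally_finite V E \<longleftrightarrow> (\<forall>v\<in>V. finite (nbrs E v))"

definition walk :: "('a \<Rightarrow> 'a \<Rightarrow> bool) \<Rightarrow> 'a list \<Rightarrow> bool" where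
  "walk E xs \<longleftrightarrow> xs \<noteq> [] \<and> (\<forall>i. Suc i < length xs \<longrightarrow> E (xs ! i) (xs ! Suc i))"

definition connected_graph :: "'a set \<Rightarrow> ('a \<Rightarrow> 'a \<Rightarrow> bool) \<Rightarrow> bool" where
  "connected_graph V E \<longleftrightarrow> V \<noteq> {} \<and>
     (\<forall>u\<in>V. \<forall>v\<in>V. \<exists>xs. walk E xs \<and> hd xs = u \<and> last xs = v)"

definition gdist :: "('a \<Rightarrow> 'a \<Rightarrow> bool) \<Rightarrow> 'a \<Rightarrow> 'a \<Rightarrow> nat" where
  "gdist E u v = (LEAST n. \<exists>xs. walk E xs \<and> hd xs = u \<and> last xs = v \<and> length xs = Suc n)"

definition unif_nbr :: "('a \<Rightarrow> 'a \<Rightarrow> bool) \<Rightarrow> 'a \<Rightarrow> 'a \<Rightarrow> real" where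
  "unif_nbr E v u = (if E v u then 1 / real (card (nbrs E v)) else 0)"

definition coupling :: "('a \<Rightarrow> 'a \<Rightarrow> bool) \<Rightarrow> 'a \<Rightarrow> 'a \<Rightarrow> ('a \<Rightarrow> 'a \<Rightarrow> real) \<Rightarrow> bool" where
  "coupling E x y \<pi> \<longleftrightarrow>
     (\<forall>a b. \<pi> a b \<ge> 0) \<and>
     (\<forall>a b. \<pi> a b \<noteq> 0 \<longrightarrow> a \<in> nbrs E x \<and> b \<in> nbrs E y) \<and>
     (\<forall>a\<in>nbrs E x. (\<Sum>b\<in>nbrs E y. \<pi> a b) = unif_nbr E x a) \<and>
     (\<forall>b\<in>nbrs E y. (\<Sum>a\<in>nbrs E x. \<pi> a b) = unif_nbr E y b)"

definition W1 :: "('a \<Rightarrow> 'a \<Rightarrow> bool) \<Rightarrow> 'a \<Rightarrow> 'a \<Rightarrow> real" where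
  "W1 E x y = Inf {(\<Sum>a\<in>nbrs E x. \<Sum>b\<in>nbrs E y. \<pi> a b * real (gdist E a b)) | \<pi>. coupling E x y \<pi>}"

definition kappa :: "('a \<Rightarrow> 'a \<Rightarrow> bool) \<Rightarrow> 'a \<Rightarrow> 'a \<Rightarrow> real" where
  "kappa E x y = 1 - W1 E x y"

definition ricci_flat :: "'a set \<Rightarrow> ('a \<Rightarrow> 'a \<Rightarrow> bool) \<Rightarrow> bool" where
  "ricci_flat V E \<longleftrightarrow> (\<forall>x\<in>V. \<forall>y\<in>V. E x y \<longrightarrow> kappa E x y = 0)"

definition is_cycle :: "'a set \<Rightarrow> ('a \<Rightarrow> 'a \<Rightarrow> bool) \<Rightarrow> 'a list \<Rightarrow> bool" where
  "is_cycle V E xs \<longleftrightarrow> length xs \<ge> 3 \<and> distinct xs \<and> set xs \<subseteq> V \<and> walk E xs \<and> E (last xs) (hd xs)"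

text \<open>Girth: length of a shortest cycle; \<infinity> if there is none.\<close>
definition girth :: "'a set \<Rightarrow> ('a \<Rightarrow> 'a \<Rightarrow> bool) \<Rightarrow> enat" where
  "girth V E = Inf {enat (length xs) | xs. is_cycle V E xs}"

definition graph_iso :: "'a set \<Rightarrow> ('a \<Rightarrow> 'a \<Rightarrow> bool) \<Rightarrow> 'b set \<Rightarrow> ('b \<Rightarrow> 'b \<Rightarrow> bool) \<Rightarrow> bool" where
  "graph_iso V E W F \<longleftrightarrow> (\<exists>f. bij_betw f V W \<and> (\<forall>x\<in>V. \<forall>y\<in>V. E x y \<longleftrightarrow> F (f x) (f y)))"

definition path_E :: "nat \<Rightarrow> nat \<Rightarrow> nat \<Rightarrow> bool" where
  "path_E n i j \<longleftrightarrow> i < n \<and> j < n \<and> (j = i + 1 \<or> i = j + 1)"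

definition ray_E :: "nat \<Rightarrow> nat \<Rightarrow> bool" where
  "ray_E i j \<longleftrightarrow> (j = i + 1 \<or> i = j + 1)"

definition line_E :: "int \<Rightarrow> int \<Rightarrow> bool" where
  "line_E i j \<longleftrightarrow> (j = i + 1 \<or> i = j + 1)"

definition cycle_E :: "nat \<Rightarrow> nat \<Rightarrow> nat \<Rightarrow> bool" where
  "cycle_E n i j \<longleftrightarrow> i < n \<and> j < n \<and> i \<noteq> j \<and> (j = (i + 1) mod n \<or> i = (j + 1) mod n)"

text \<open>Star T_n: centre 0, leaves 1..n-1.\<close>
definition star_E :: "nat \<Rightarrow> nat \<Rightarrow> nat \<Rightarrow> bool" where
  "star_E n i j \<longleftrightarrow> i < n \<and> j < n \<and> i \<noteq> j \<and> (i = 0 \<or> j = 0)"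

end

theory Submission
  imports Defs
begin


lemma walk_single[simp]: "walk E [a]" by (simp add: walk_def)

lemma walk_Cons2[simp]: "walk E (a # b # xs) \<longleftrightarrow> E a b \<and> walk E (b # xs)"
proof
  assume h: "walk E (a # b # xs)"
  have "E a b" using h unfolding walk_def by (metis length_Cons nth_Cons_0 nth_Cons_Suc zero_less_Suc Suc_less_eq)
  moreover have "walk E (b # xs)" unfolding walk_def
  proof (intro conjI allI impI)
    fix i assume "Suc i < length (b # xs)"
    then have "Suc (Suc i) < length (a # b # xs)" by simp
    with h have "E ((a#b#xs) ! Suc i) ((a#b#xs) ! Suc (Suc i))" unfolding walk_def by blast
    then show "E ((b # xs) ! i) ((b # xs) ! Suc i)" by simp
  qed simp
  ultimately show "E a b \<and> walk E (b # xs)" by blast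
next
  assume h: "E a b \<and> walk E (b # xs)"
  show "walk E (a # b # xs)" unfolding walk_def
  proof (intro conjI allI impI)
    fix i assume i: "Suc i < length (a # b # xs)"
    show "E ((a # b # xs) ! i) ((a # b # xs) ! Suc i)"
    proof (cases i)
      case 0 then show ?thesis using h by simp
    next
      case (Suc j)
      then have "Suc j < length (b # xs)" using i by simp
      then have "E ((b # xs) ! j) ((b # xs) ! Suc j)" using h unfolding walk_def by blast
      then show ?thesis using Suc by simp
    qed
  qed simp
qed

lemma gdist_le1: "E a b \<Longrightarrow> gdist E a b \<le> 1"
  unfolding gdist_def
  by (rule Least_le, rule exI[of _ "[a,b]"], simp)

lemma gdist_le1': "E a b \<Longrightarrow> gdist E a b \<le> Suc 0" using gdist_le1 by simp

lemma gdist_ex: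
  assumes "walk E xs" "hd xs = a" "last xs = b"
  shows "\<exists>ys. walk E ys \<and> hd ys = a \<and> last ys = b \<and> length ys = Suc (gdist E a b)"
proof -
  have ne: "xs \<noteq> []" using assms(1) by (simp add: walk_def)
  have "\<exists>n. \<exists>ys. walk E ys \<and> hd ys = a \<and> last ys = b \<and> length ys = Suc n"
    using assms ne by (intro exI[of _ "length xs - 1"] exI[of _ xs]) auto
  then show ?thesis unfolding gdist_def by (rule LeastI_ex)
qed

lemma gdist_ge1:
  assumes "walk E xs" "hd xs = a" "last xs = b" "a \<noteq> b"
  shows "1 \<le> gdist E a b"
proof (rule ccontr)
  assume "\<not> 1 \<le> gdist E a b"
  then have g: "gdist E a b = 0" by simp
  obtain ys where ys: "walk E ys" "hd ys = a" "last ys = b" "length ys = Suc (gdist E a b)"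
    using gdist_ex[OF assms(1-3)] by blast
  then obtain c where "ys = [c]" using g by (metis length_0_conv length_Suc_conv)
  then show False using ys assms(4) by simp
qed

lemma gdist_ge2:
  assumes "walk E xs" "hd xs = a" "last xs = b" "a \<noteq> b" "\<not> E a b"
  shows "2 \<le> gdist E a b"
proof (rule ccontr)
  assume "\<not> 2 \<le> gdist E a b"
  moreover have "1 \<le> gdist E a b" using gdist_ge1[OF assms(1-4)] .
  ultimately have g: "gdist E a b = 1" by simp
  obtain ys where ys: "walk E ys" "hd ys = a" "last ys = b" "length ys = Suc (gdist E a b)"
    using gdist_ex[OF assms(1-3)] by blast
  then obtain c d where "ys = [c, d]" using g
    by (metis One_nat_def length_0_conv length_Suc_conv)
  then show False using ys assms(5) by simp
qed


lemma unif_in: "b \<in> nbrs E v \<Longrightarrow> unif_nbr E v b = 1 / real (card (nbrs E v))"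
  by (simp add: unif_nbr_def nbrs_def)

lemma unif_sum:
  assumes "finite (nbrs E v)" "nbrs E v \<noteq> {}"
  shows "(\<Sum>b\<in>nbrs E v. unif_nbr E v b) = 1"
proof -
  have "(\<Sum>b\<in>nbrs E v. unif_nbr E v b) = (\<Sum>b\<in>nbrs E v. 1 / real (card (nbrs E v)))"
    by (rule sum.cong) (auto simp: unif_in)
  also have "\<dots> = 1" using assms by simp
  finally show ?thesis .
qed

definition cost :: "('a \<Rightarrow> 'a \<Rightarrow> bool) \<Rightarrow> 'a \<Rightarrow> 'a \<Rightarrow> ('a \<Rightarrow> 'a \<Rightarrow> real) \<Rightarrow> real" where
  "cost E x y \<pi> = (\<Sum>a\<in>nbrs E x. \<Sum>b\<in>nbrs E y. \<pi> a b * real (gdist E a b))"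

lemma W1_cost: "W1 E x y = Inf (cost E x y ` {\<pi>. coupling E x y \<pi>})"
  unfolding W1_def cost_def by (rule arg_cong[where f=Inf]) auto

lemma cost_nonneg: "coupling E x y \<pi> \<Longrightarrow> 0 \<le> cost E x y \<pi>"
  unfolding cost_def coupling_def by (intro sum_nonneg mult_nonneg_nonneg) auto

lemma W1_le_cost: "coupling E x y \<pi> \<Longrightarrow> W1 E x y \<le> cost E x y \<pi>"
  unfolding W1_cost
  by (rule cInf_lower) (auto intro!: bdd_belowI[of _ 0] cost_nonneg)

lemma product_coupling:
  assumes "finite (nbrs E x)" "nbrs E x \<noteq> {}" "finite (nbrs E y)" "nbrs E y \<noteq> {}"
  shows "coupling E x y (\<lambda>a b. unif_nbr E x a * unif_nbr E y b)"
proof -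
  have 1: "\<forall>a b. 0 \<le> unif_nbr E x a * unif_nbr E y b" by (simp add: unif_nbr_def)
  have 2: "\<forall>a b. unif_nbr E x a * unif_nbr E y b \<noteq> 0 \<longrightarrow> a \<in> nbrs E x \<and> b \<in> nbrs E y"
    by (auto simp: unif_nbr_def nbrs_def split: if_splits)
  have 3: "\<forall>a\<in>nbrs E x. (\<Sum>b\<in>nbrs E y. unif_nbr E x a * unif_nbr E y b) = unif_nbr E x a"
    by (simp add: sum_distrib_left[symmetric] unif_sum assms)
  have 4: "\<forall>b\<in>nbrs E y. (\<Sum>a\<in>nbrs E x. unif_nbr E x a * unif_nbr E y b) = unif_nbr E y b"
    by (simp add: sum_distrib_right[symmetric] unif_sum assms)
  show ?thesis unfolding coupling_def using 1 2 3 4 by blast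
qed

lemma W1_upper:
  assumes c: "coupling E x y \<pi>" and fx: "finite (nbrs E x)" "nbrs E x \<noteq> {}"
    and fy: "finite (nbrs E y)"
    and d: "\<And>a b. a \<in> nbrs E x \<Longrightarrow> b \<in> nbrs E y \<Longrightarrow> \<pi> a b \<noteq> 0 \<Longrightarrow> gdist E a b \<le> 1"
  shows "W1 E x y \<le> 1"
proof -
  have "W1 E x y \<le> cost E x y \<pi>" by (rule W1_le_cost[OF c])
  also have "\<dots> \<le> (\<Sum>a\<in>nbrs E x. \<Sum>b\<in>nbrs E y. \<pi> a b)"
    unfolding cost_def
  proof (intro sum_mono)
    fix a b assume ab: "a \<in> nbrs E x" "b \<in> nbrs E y"
    show "\<pi> a b * real (gdist E a b) \<le> \<pi> a b"
    proof (cases "\<pi> a b = 0")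
      case False
      then have "real (gdist E a b) \<le> 1" using d[OF ab] by simp
      moreover have "0 \<le> \<pi> a b" using c unfolding coupling_def by blast
      ultimately show ?thesis by (simp add: mult_left_le)
    qed simp
  qed
  also have "\<dots> = (\<Sum>a\<in>nbrs E x. unif_nbr E x a)"
    using c unfolding coupling_def by (intro sum.cong) auto
  also have "\<dots> = 1" by (rule unif_sum[OF fx])
  finally show ?thesis .
qed

lemma W1_lower:
  assumes fx: "finite (nbrs E x)" "nbrs E x \<noteq> {}"
    and fy: "finite (nbrs E y)" "nbrs E y \<noteq> {}"
    and d: "\<And>a b. a \<in> nbrs E x \<Longrightarrow> b \<in> nbrs E y \<Longrightarrow> g b - h a \<le> real (gdist E a b)"
  shows "(\<Sum>b\<in>nbrs E y. g b) / real (card (nbrs E y)) - (\<Sum>a\<in>nbrs E x. h a) / real (card (nbrs E x)) \<le> W1 E x y"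
  unfolding W1_cost
proof (rule cInf_greatest)
  show "cost E x y ` {\<pi>. coupling E x y \<pi>} \<noteq> {}" using product_coupling[OF fx fy] by blast
next
  fix c assume "c \<in> cost E x y ` {\<pi>. coupling E x y \<pi>}"
  then obtain \<pi> where cp: "coupling E x y \<pi>" and c: "c = cost E x y \<pi>" by blast
  have pos: "\<And>a b. 0 \<le> \<pi> a b" using cp unfolding coupling_def by blast
  have "(\<Sum>a\<in>nbrs E x. \<Sum>b\<in>nbrs E y. \<pi> a b * (g b - h a)) \<le> c"
    unfolding c cost_def by (intro sum_mono mult_left_mono d pos) auto
  moreover have "(\<Sum>a\<in>nbrs E x. \<Sum>b\<in>nbrs E y. \<pi> a b * (g b - h a))
     = (\<Sum>b\<in>nbrs E y. g b * (\<Sum>a\<in>nbrs E x. \<pi> a b)) - (\<Sum>a\<in>nbrs E x. h a * (\<Sum>b\<in>nbrs E y. \<pi> a b))"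
    by (simp add: algebra_simps sum_subtractf sum_distrib_left sum_distrib_right sum.swap[of _ "nbrs E x"])
  moreover have "(\<Sum>b\<in>nbrs E y. g b * (\<Sum>a\<in>nbrs E x. \<pi> a b)) = (\<Sum>b\<in>nbrs E y. g b) / real (card (nbrs E y))"
    using cp unfolding coupling_def by (simp add: unif_in sum_divide_distrib)
  moreover have "(\<Sum>a\<in>nbrs E x. h a * (\<Sum>b\<in>nbrs E y. \<pi> a b)) = (\<Sum>a\<in>nbrs E x. h a) / real (card (nbrs E x))"
    using cp unfolding coupling_def by (simp add: unif_in sum_divide_distrib)
  ultimately show "(\<Sum>b\<in>nbrs E y. g b) / real (card (nbrs E y)) - (\<Sum>a\<in>nbrs E x. h a) / real (card (nbrs E x)) \<le> c"
    by linarith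
qed


definition NT :: "('a \<Rightarrow> 'a \<Rightarrow> bool) \<Rightarrow> bool" where
  "NT E \<longleftrightarrow> (\<forall>x y z. E x y \<longrightarrow> E y z \<longrightarrow> E z x \<longrightarrow> False)"
definition NS :: "('a \<Rightarrow> 'a \<Rightarrow> bool) \<Rightarrow> bool" where
  "NS E \<longleftrightarrow> (\<forall>a b c d. E a b \<longrightarrow> E b c \<longrightarrow> E c d \<longrightarrow> E d a \<longrightarrow> a \<noteq> c \<longrightarrow> b \<noteq> d \<longrightarrow> False)"
definition degS :: "('a \<Rightarrow> 'a \<Rightarrow> bool) \<Rightarrow> bool" where
  "degS E \<longleftrightarrow> (\<forall>x y. E x y \<longrightarrow> card (nbrs E x) = 1 \<or> card (nbrs E y) = 1 \<or>
       (card (nbrs E x) = 2 \<and> card (nbrs E y) = 2))"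

lemma graphD: assumes "graph V E" "E x y" shows "x \<in> V" "y \<in> V" "E y x" "x \<noteq> y"
  using assms unfolding graph_def by blast+

lemma in_nbrs[simp]: "u \<in> nbrs E v \<longleftrightarrow> E v u" by (simp add: nbrs_def)

locale lgraph =
  fixes V E assumes G: "graph V E" and LF: "locally_finite V E"
    and NE: "\<forall>v\<in>V. nbrs E v \<noteq> {}"
begin

lemma sym: "E x y \<Longrightarrow> E y x" using graphD[OF G] by blast
lemma irr: "E x y \<Longrightarrow> x \<noteq> y" using graphD[OF G] by blast
lemma fin: "E x y \<Longrightarrow> finite (nbrs E x)" using graphD[OF G] LF unfolding locally_finite_def by blast
lemma nemp: "E x y \<Longrightarrow> nbrs E x \<noteq> {}" by auto
lemma cpos: "E x y \<Longrightarrow> card (nbrs E x) > 0" using fin nemp card_gt_0_iff by blast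

lemma walk4: "E x y \<Longrightarrow> u \<in> nbrs E x \<Longrightarrow> v \<in> nbrs E y \<Longrightarrow> walk E [u,x,y,v]"
  using sym by simp

lemma W1_leaf_x:
  assumes xy: "E x y" and d: "card (nbrs E x) = 1"
  shows "W1 E x y = 1"
proof -
  have Nx: "nbrs E x = {y}" using d xy by (metis card_1_singletonE in_nbrs singletonD)
  have fy: "finite (nbrs E y)" "nbrs E y \<noteq> {}" "card (nbrs E y) > 0" using fin nemp cpos sym xy by blast+
  have fx: "finite (nbrs E x)" "nbrs E x \<noteq> {}" using Nx by auto
  define \<pi> where "\<pi> a b = (if a = y \<and> E y b then 1 / real (card (nbrs E y)) else 0)" for a b
  have cp: "coupling E x y \<pi>"
  proof -
    have 1: "\<forall>a b. 0 \<le> \<pi> a b" by (simp add: \<pi>_def)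
    have 2: "\<forall>a b. \<pi> a b \<noteq> 0 \<longrightarrow> a \<in> nbrs E x \<and> b \<in> nbrs E y" by (auto simp: \<pi>_def Nx)
    have 3: "\<forall>a\<in>nbrs E x. (\<Sum>b\<in>nbrs E y. \<pi> a b) = unif_nbr E x a"
      using fy by (simp add: Nx \<pi>_def unif_nbr_def xy)
    have 4: "\<forall>b\<in>nbrs E y. (\<Sum>a\<in>nbrs E x. \<pi> a b) = unif_nbr E y b"
      by (simp add: Nx \<pi>_def unif_nbr_def)
    show ?thesis unfolding coupling_def using 1 2 3 4 by blast
  qed
  have "W1 E x y \<le> 1"
    by (rule W1_upper[OF cp fx fy(1)]) (auto simp: \<pi>_def split: if_splits intro: gdist_le1')
  moreover have "(\<Sum>b\<in>nbrs E y. (\<lambda>_. 1::real) b) / real (card (nbrs E y)) - (\<Sum>a\<in>nbrs E x. (\<lambda>_. 0::real) a) / real (card (nbrs E x)) \<le> W1 E x y"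
  proof (rule W1_lower[OF fx fy(1,2)])
    fix a b assume ab: "a \<in> nbrs E x" "b \<in> nbrs E y"
    have "1 \<le> gdist E a b"
      by (rule gdist_ge1[OF walk4[OF xy ab]]) (use ab Nx irr in auto)
    then show "1 - 0 \<le> real (gdist E a b)" by simp
  qed
  ultimately show ?thesis using fy by simp
qed

lemma W1_leaf_y:
  assumes xy: "E x y" and d: "card (nbrs E y) = 1"
  shows "W1 E x y = 1"
proof -
  have Ny: "nbrs E y = {x}" using d sym[OF xy] by (metis card_1_singletonE in_nbrs singletonD)
  have fx: "finite (nbrs E x)" "nbrs E x \<noteq> {}" "card (nbrs E x) > 0" using fin nemp cpos xy by blast+
  have fy: "finite (nbrs E y)" "nbrs E y \<noteq> {}" using Ny by auto
  define \<pi> where "\<pi> a b = (if b = x \<and> E x a then 1 / real (card (nbrs E x)) else 0)" for a b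
  have cp: "coupling E x y \<pi>"
  proof -
    have 1: "\<forall>a b. 0 \<le> \<pi> a b" by (simp add: \<pi>_def)
    have 2: "\<forall>a b. \<pi> a b \<noteq> 0 \<longrightarrow> a \<in> nbrs E x \<and> b \<in> nbrs E y" by (auto simp: \<pi>_def Ny)
    have 3: "\<forall>a\<in>nbrs E x. (\<Sum>b\<in>nbrs E y. \<pi> a b) = unif_nbr E x a"
      by (simp add: Ny \<pi>_def unif_nbr_def)
    have 4: "\<forall>b\<in>nbrs E y. (\<Sum>a\<in>nbrs E x. \<pi> a b) = unif_nbr E y b"
      using fx by (simp add: Ny \<pi>_def unif_nbr_def sym[OF xy])
    show ?thesis unfolding coupling_def using 1 2 3 4 by blast
  qed
  have "W1 E x y \<le> 1"
    by (rule W1_upper[OF cp fx(1,2) fy(1)]) (auto simp: \<pi>_def split: if_splits intro: gdist_le1' sym)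
  moreover have "(\<Sum>b\<in>nbrs E y. (\<lambda>_. 1::real) b) / real (card (nbrs E y)) - (\<Sum>a\<in>nbrs E x. (\<lambda>_. 0::real) a) / real (card (nbrs E x)) \<le> W1 E x y"
  proof (rule W1_lower[OF fx(1,2) fy])
    fix a b assume ab: "a \<in> nbrs E x" "b \<in> nbrs E y"
    have "1 \<le> gdist E a b"
      by (rule gdist_ge1[OF walk4[OF xy ab]]) (use ab Ny irr in auto)
    then show "1 - 0 \<le> real (gdist E a b)" by simp
  qed
  ultimately show ?thesis using fx d by simp
qed

lemma W1_lower_gen:
  assumes xy: "E x y" and nt: "NT E" and ns: "NS E"
  shows "(2 * real (card (nbrs E y)) - 1) / real (card (nbrs E y)) - 1 / real (card (nbrs E x)) \<le> W1 E x y"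
proof -
  have fx: "finite (nbrs E x)" "nbrs E x \<noteq> {}" using fin nemp xy by blast+
  have fy: "finite (nbrs E y)" "nbrs E y \<noteq> {}" using fin nemp sym xy by blast+
  define g where "g v = (if v = x then 1 else 2::real)" for v
  define h where "h u = (if u = y then 1 else 0::real)" for u
  have L: "(\<Sum>b\<in>nbrs E y. g b) / real (card (nbrs E y)) - (\<Sum>a\<in>nbrs E x. h a) / real (card (nbrs E x)) \<le> W1 E x y"
  proof (rule W1_lower[OF fx fy])
    fix u v assume uv: "u \<in> nbrs E x" "v \<in> nbrs E y"
    have w: "walk E [u,x,y,v]" by (rule walk4[OF xy uv])
    show "g v - h u \<le> real (gdist E u v)"
    proof (cases "u = y")
      case True
      then show ?thesis
      proof (cases "v = x")
        case False
        have "1 \<le> gdist E u v" by (rule gdist_ge1[OF w]) (use True uv irr in auto)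
        then show ?thesis using True False by (simp add: g_def h_def)
      qed (simp add: g_def h_def True)
    next
      case uy: False
      show ?thesis
      proof (cases "v = x")
        case True
        have "1 \<le> gdist E u v" by (rule gdist_ge1[OF w]) (use True uv irr in auto)
        then show ?thesis using True uy by (simp add: g_def h_def)
      next
        case vx: False
        have Exu: "E x u" and Eyv: "E y v" using uv by auto
        have "u \<noteq> v"
        proof
          assume "u = v"
          then have "E y u" using Eyv by simp
          then show False using nt[unfolded NT_def, rule_format, OF xy _ sym[OF Exu]] by blast
        qed
        moreover have "\<not> E u v"
        proof
          assume Euv: "E u v"
          show False using ns[unfolded NS_def, rule_format, OF Exu Euv sym[OF Eyv] sym[OF xy]] uy vx by blast
        qed
        ultimately have "2 \<le> gdist E u v" using gdist_ge2[OF w] by simp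
        then show ?thesis using uy vx by (simp add: g_def h_def)
      qed
    qed
  qed
  have xin: "x \<in> nbrs E y" using sym xy by simp
  have "(\<Sum>b\<in>nbrs E y. g b) = g x + (\<Sum>b\<in>nbrs E y - {x}. g b)"
    using sum.remove[OF fy(1) xin] by simp
  also have "(\<Sum>b\<in>nbrs E y - {x}. g b) = (\<Sum>b\<in>nbrs E y - {x}. 2)"
    by (rule sum.cong) (auto simp: g_def)
  also have "\<dots> = 2 * (real (card (nbrs E y)) - 1)"
    using fy xin by (simp add: card_Diff_singleton of_nat_diff card_gt_0_iff Suc_leI)
  finally have sg: "(\<Sum>b\<in>nbrs E y. g b) = 2 * real (card (nbrs E y)) - 1" by (simp add: g_def)
  have sh: "(\<Sum>a\<in>nbrs E x. h a) = 1" using fx xy unfolding h_def by (simp add: sum.delta)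
  show ?thesis using L sg sh by simp
qed

lemma W1_22:
  assumes xy: "E x y" and nt: "NT E" and ns: "NS E"
    and dx: "card (nbrs E x) = 2" and dy: "card (nbrs E y) = 2"
  shows "W1 E x y = 1"
proof -
  have fx: "finite (nbrs E x)" "nbrs E x \<noteq> {}" using fin nemp xy by blast+
  have fy: "finite (nbrs E y)" "nbrs E y \<noteq> {}" using fin nemp sym xy by blast+
  have "card (nbrs E x - {y}) = 1" using dx xy fx by (simp add: card_Diff_singleton)
  then obtain a where a: "nbrs E x - {y} = {a}" by (rule card_1_singletonE)
  have "card (nbrs E y - {x}) = 1" using dy sym[OF xy] fy by (simp add: card_Diff_singleton)
  then obtain b where b: "nbrs E y - {x} = {b}" by (rule card_1_singletonE)
  have yin: "y \<in> nbrs E x" and xin: "x \<in> nbrs E y" using xy sym[OF xy] by auto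
  have Nx: "nbrs E x = {y, a}" using insert_Diff[OF yin] a by simp
  have Ny: "nbrs E y = {x, b}" using insert_Diff[OF xin] b by simp
  have ay: "a \<noteq> y" using a by blast
  have bx: "b \<noteq> x" using b by blast
  have Exa: "E x a" and Eyb: "E y b" using Nx Ny by auto
  have ax: "a \<noteq> x" using irr Exa by blast
  have yb: "y \<noteq> b" using irr Eyb by blast
  define \<pi> where "\<pi> u v = (if (u = a \<and> v = x) \<or> (u = y \<and> v = b) then 1/2 else 0::real)" for u v
  have ux: "unif_nbr E x u = 1/2" if "u \<in> nbrs E x" for u using that dx by (simp add: unif_in)
  have uy: "unif_nbr E y u = 1/2" if "u \<in> nbrs E y" for u using that dy by (simp add: unif_in)
  have cp: "coupling E x y \<pi>"
  proof -
    have 1: "\<forall>a b. 0 \<le> \<pi> a b" by (simp add: \<pi>_def)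
    have 2: "\<forall>u v. \<pi> u v \<noteq> 0 \<longrightarrow> u \<in> nbrs E x \<and> v \<in> nbrs E y" by (auto simp: \<pi>_def Nx Ny)
    have s1: "(\<Sum>v\<in>nbrs E y. \<pi> u v) = \<pi> u x + \<pi> u b" for u
      unfolding Ny using bx by simp
    have s2: "(\<Sum>u\<in>nbrs E x. \<pi> u v) = \<pi> y v + \<pi> a v" for v
      unfolding Nx using ay by simp
    have v1: "\<pi> y x = 0" "\<pi> y b = 1/2" "\<pi> a x = 1/2" "\<pi> a b = 0"
      unfolding \<pi>_def using ay bx ax yb by auto
    have ux': "unif_nbr E x y = 1/2" "unif_nbr E x a = 1/2" using ux Nx by auto
    have uy': "unif_nbr E y x = 1/2" "unif_nbr E y b = 1/2" using uy Ny by auto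
    have 3: "\<forall>u\<in>nbrs E x. (\<Sum>v\<in>nbrs E y. \<pi> u v) = unif_nbr E x u"
      unfolding Nx using s1 v1 ux' by simp
    have 4: "\<forall>v\<in>nbrs E y. (\<Sum>u\<in>nbrs E x. \<pi> u v) = unif_nbr E y v"
      unfolding Ny using s2 v1 uy' by simp
    show ?thesis unfolding coupling_def using 1 2 3 4 by blast
  qed
  have "W1 E x y \<le> 1"
  proof (rule W1_upper[OF cp fx fy(1)])
    fix u v assume "u \<in> nbrs E x" "v \<in> nbrs E y" "\<pi> u v \<noteq> 0"
    then have "(u = a \<and> v = x) \<or> (u = y \<and> v = b)" unfolding \<pi>_def by (simp split: if_splits)
    then show "gdist E u v \<le> 1"
    proof
      assume "u = a \<and> v = x" then show ?thesis using gdist_le1[of E a x, OF sym[OF Exa]] by simp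
    next
      assume "u = y \<and> v = b" then show ?thesis using gdist_le1[of E y b, OF Eyb] by simp
    qed
  qed
  moreover have "1 \<le> W1 E x y" using W1_lower_gen[OF xy nt ns] dx dy by simp
  ultimately show ?thesis by simp
qed

lemma W1_bad:
  assumes xy: "E x y" and nt: "NT E" and ns: "NS E"
    and dx: "card (nbrs E x) \<ge> 2" and dy: "card (nbrs E y) \<ge> 2"
    and n22: "\<not> (card (nbrs E x) = 2 \<and> card (nbrs E y) = 2)"
  shows "W1 E x y > 1"
proof -
  define p where "p = real (card (nbrs E x))"
  define q where "q = real (card (nbrs E y))"
  have p2: "p \<ge> 2" and q2: "q \<ge> 2" using dx dy by (auto simp: p_def q_def)
  have pq: "p \<ge> 3 \<or> q \<ge> 3" using dx dy n22 unfolding p_def q_def by linarith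
  have e: "(2 * q - 1) / q - 1 / p = 2 - 1/q - 1/p" using q2 by (simp add: field_simps)
  have "1/q + 1/p < 1"
  proof (cases "p \<ge> 3")
    case True
    have "1/q \<le> 1/2" using q2 by (simp add: field_simps)
    moreover have "1/p \<le> 1/3" using True by (simp add: field_simps)
    ultimately show ?thesis by linarith
  next
    case False
    then have q3: "q \<ge> 3" using pq by simp
    have "1/q \<le> 1/3" using q3 by (simp add: field_simps)
    moreover have "1/p \<le> 1/2" using p2 by (simp add: field_simps)
    ultimately show ?thesis by linarith
  qed
  then show ?thesis using W1_lower_gen[OF xy nt ns] e unfolding p_def q_def by linarith
qed

lemma local_char:
  assumes nt: "NT E" and ns: "NS E"
  shows "ricci_flat V E \<longleftrightarrow> degS E"
proof
  assume rf: "ricci_flat V E"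
  show "degS E" unfolding degS_def
  proof (intro allI impI)
    fix x y assume xy: "E x y"
    have k: "kappa E x y = 0" using rf xy graphD[OF G xy] unfolding ricci_flat_def by blast
    show "card (nbrs E x) = 1 \<or> card (nbrs E y) = 1 \<or> (card (nbrs E x) = 2 \<and> card (nbrs E y) = 2)"
    proof (rule ccontr)
      assume h: "\<not> ?thesis"
      have "card (nbrs E x) \<ge> 2" using h cpos[OF xy] by linarith
      moreover have "card (nbrs E y) \<ge> 2" using h cpos[OF sym[OF xy]] by linarith
      ultimately have "W1 E x y > 1" using W1_bad[OF xy nt ns] h by blast
      then show False using k unfolding kappa_def by simp
    qed
  qed
next
  assume ds: "degS E"
  show "ricci_flat V E" unfolding ricci_flat_def kappa_def
  proof (intro ballI impI)
    fix x y assume "x \<in> V" "y \<in> V" and xy: "E x y"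
    have "card (nbrs E x) = 1 \<or> card (nbrs E y) = 1 \<or> (card (nbrs E x) = 2 \<and> card (nbrs E y) = 2)"
      using ds xy unfolding degS_def by blast
    then have "W1 E x y = 1"
    proof (elim disjE conjE)
      assume "card (nbrs E x) = 1" then show ?thesis by (rule W1_leaf_x[OF xy])
    next
      assume "card (nbrs E y) = 1" then show ?thesis by (rule W1_leaf_y[OF xy])
    next
      assume "card (nbrs E x) = 2" "card (nbrs E y) = 2"
      then show ?thesis by (rule W1_22[OF xy nt ns])
    qed
    then show "1 - W1 E x y = 0" by simp
  qed
qed

end


lemma list3: "length xs = 3 \<Longrightarrow> \<exists>p q r. xs = [p,q,r]"
  by (cases xs; cases "tl xs"; cases "tl (tl xs)"; auto)
lemma list4: "length xs = 4 \<Longrightarrow> \<exists>p q r s. xs = [p,q,r,s]"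
  by (cases xs; cases "tl xs"; cases "tl (tl xs)"; cases "tl (tl (tl xs))"; auto)

lemma girth_char:
  assumes G: "graph V E"
  shows "girth V E \<ge> 5 \<longleftrightarrow> NT E \<and> NS E"
proof
  assume g: "girth V E \<ge> 5"
  have cyc: "enat (length xs) \<ge> 5" if "is_cycle V E xs" for xs
  proof -
    have "girth V E \<le> enat (length xs)" unfolding girth_def using that by (auto intro: Inf_lower)
    then show ?thesis using g order_trans by blast
  qed
  show "NT E \<and> NS E"
  proof
    show "NT E" unfolding NT_def
    proof (intro allI impI)
      fix x y z assume h: "E x y" "E y z" "E z x"
      have "is_cycle V E [x,y,z]" unfolding is_cycle_def
        using h graphD[OF G h(1)] graphD[OF G h(2)] graphD[OF G h(3)] by auto
      then show False using cyc[of "[x,y,z]"] by (simp add: numeral_eq_enat)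
    qed
    show "NS E" unfolding NS_def
    proof (intro allI impI)
      fix a b c d assume h: "E a b" "E b c" "E c d" "E d a" "a \<noteq> c" "b \<noteq> d"
      have "is_cycle V E [a,b,c,d]" unfolding is_cycle_def
        using h graphD[OF G h(1)] graphD[OF G h(2)] graphD[OF G h(3)] graphD[OF G h(4)] by auto
      then show False using cyc[of "[a,b,c,d]"] by (simp add: numeral_eq_enat)
    qed
  qed
next
  assume h: "NT E \<and> NS E"
  show "girth V E \<ge> 5" unfolding girth_def
  proof (rule Inf_greatest, clarify)
    fix xs assume c: "is_cycle V E xs"
    have l3: "length xs \<ge> 3" using c unfolding is_cycle_def by simp
    have "length xs \<noteq> 3"
    proof
      assume "length xs = 3"
      then obtain p q r where xs: "xs = [p,q,r]" using list3 by blast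
      then show False using c h unfolding is_cycle_def NT_def by auto
    qed
    moreover have "length xs \<noteq> 4"
    proof
      assume "length xs = 4"
      then obtain p q r s where xs: "xs = [p,q,r,s]" using list4 by blast
      then show False using c h unfolding is_cycle_def NS_def by auto
    qed
    ultimately have "length xs \<ge> 5" using l3 by linarith
    then show "5 \<le> enat (length xs)" by (simp add: numeral_eq_enat)
  qed
qed

lemma iso_transfer:
  assumes iso: "graph_iso V E M R" and G: "graph V E" and GM: "graph M R"
  shows "(degS R \<longrightarrow> degS E) \<and> (NT R \<longrightarrow> NT E) \<and> (NS R \<longrightarrow> NS E)"
proof -
  obtain f where bij: "bij_betw f V M" and e: "\<forall>x\<in>V. \<forall>y\<in>V. E x y \<longleftrightarrow> R (f x) (f y)"
    using iso unfolding graph_iso_def by blast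
  have inj: "inj_on f V" using bij bij_betw_def by blast
  have EV: "E x y \<Longrightarrow> x \<in> V \<and> y \<in> V" for x y using graphD[OF G] by blast
  have ER: "E x y \<Longrightarrow> R (f x) (f y)" for x y using e EV by blast
  have card_eq: "card (nbrs E x) = card (nbrs R (f x))" if x: "x \<in> V" for x
  proof -
    have sub: "nbrs E x \<subseteq> V" using EV by (auto simp: nbrs_def)
    have "f ` nbrs E x = nbrs R (f x)"
    proof
      show "f ` nbrs E x \<subseteq> nbrs R (f x)" using ER by (auto simp: nbrs_def)
    next
      show "nbrs R (f x) \<subseteq> f ` nbrs E x"
      proof
        fix w assume "w \<in> nbrs R (f x)"
        then have w: "R (f x) w" by (simp add: nbrs_def)
        then have "w \<in> M" using graphD[OF GM w] by blast
        then obtain u where u: "u \<in> V" "w = f u" using bij by (metis bij_betw_iff_bijections)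
        then have "E x u" using e x w by blast
        then show "w \<in> f ` nbrs E x" using u by (auto simp: nbrs_def)
      qed
    qed
    then have "card (nbrs R (f x)) = card (f ` nbrs E x)" by simp
    also have "\<dots> = card (nbrs E x)" using card_image[OF inj_on_subset[OF inj sub]] .
    finally show ?thesis by simp
  qed
  have 1: "degS R \<longrightarrow> degS E"
  proof
    assume d: "degS R"
    show "degS E" unfolding degS_def
    proof (intro allI impI)
      fix x y assume xy: "E x y"
      have "R (f x) (f y)" using ER xy by blast
      then show "card (nbrs E x) = 1 \<or> card (nbrs E y) = 1 \<or> (card (nbrs E x) = 2 \<and> card (nbrs E y) = 2)"
        using d unfolding degS_def using card_eq EV[OF xy] by simp
    qed
  qed
  have 2: "NT R \<longrightarrow> NT E" unfolding NT_def using ER by blast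
  have 3: "NS R \<longrightarrow> NS E" unfolding NS_def
  proof (intro impI allI)
    fix a b c d
    assume ns: "\<forall>a b c d. R a b \<longrightarrow> R b c \<longrightarrow> R c d \<longrightarrow> R d a \<longrightarrow> a \<noteq> c \<longrightarrow> b \<noteq> d \<longrightarrow> False"
      and h: "E a b" "E b c" "E c d" "E d a" "a \<noteq> c" "b \<noteq> d"
    have "f a \<noteq> f c" using h(5) inj EV[OF h(1)] EV[OF h(3)] inj_on_contraD by metis
    moreover have "f b \<noteq> f d" using h(6) inj EV[OF h(1)] EV[OF h(3)] inj_on_contraD by metis
    ultimately show False using ns ER h(1-4) by blast
  qed
  show ?thesis using 1 2 3 by blast
qed

lemma card_le2: "A \<subseteq> {a, b} \<Longrightarrow> finite A \<and> card A \<le> 2"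
proof -
  assume A: "A \<subseteq> {a, b}"
  have "card {a,b} \<le> 2" by (cases "a = b") auto
  then show ?thesis using A finite_subset card_mono[OF _ A] by fastforce
qed

lemma deg2_degS:
  assumes "\<And>x. nbrs R x \<subseteq> {p x, q x}" and sy: "\<And>x y. R x y \<Longrightarrow> R y x"
  shows "degS R"
  unfolding degS_def
proof (intro allI impI)
  fix x y assume xy: "R x y"
  have fx: "finite (nbrs R x)" "card (nbrs R x) \<le> 2" using card_le2[OF assms(1)] by blast+
  have fy: "finite (nbrs R y)" "card (nbrs R y) \<le> 2" using card_le2[OF assms(1)] by blast+
  have "y \<in> nbrs R x" using xy by simp
  then have "nbrs R x \<noteq> {}" by blast
  then have "card (nbrs R x) \<ge> 1" using fx card_gt_0_iff by (metis Suc_leI One_nat_def)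
  moreover have "x \<in> nbrs R y" using sy[OF xy] by simp
  then have "nbrs R y \<noteq> {}" by blast
  then have "card (nbrs R y) \<ge> 1" using fy card_gt_0_iff by (metis Suc_leI One_nat_def)
  ultimately show "card (nbrs R x) = 1 \<or> card (nbrs R y) = 1 \<or> (card (nbrs R x) = 2 \<and> card (nbrs R y) = 2)"
    using fx fy by linarith
qed


lemma cyc_mod: "(j::nat) < n \<Longrightarrow> (j + 1) mod n = (if j + 1 = n then 0 else j + 1)"
proof (cases "j + 1 = n")
  case False
  assume "j < n" then have "j + 1 < n" using False by simp
  then show ?thesis using False by simp
qed simp

lemma cycle_E_alt: "cycle_E n i j \<longleftrightarrow> i < n \<and> j < n \<and> i \<noteq> j \<and>
   (j = (if i + 1 = n then 0 else i + 1) \<or> i = (if j + 1 = n then 0 else j + 1))"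
  unfolding cycle_E_def using cyc_mod by (metis)

lemma path_model: "graph {..<n} (path_E n) \<and> NT (path_E n) \<and> NS (path_E n) \<and> degS (path_E n)"
proof (intro conjI)
  show "graph {..<n} (path_E n)" unfolding graph_def path_E_def by auto
  show "NT (path_E n)" unfolding NT_def path_E_def by auto
  show "NS (path_E n)" unfolding NS_def path_E_def by auto
  show "degS (path_E n)"
    by (rule deg2_degS[of _ "\<lambda>i. i + 1" "\<lambda>i. i - 1"]) (auto simp: nbrs_def path_E_def)
qed

lemma ray_model: "graph UNIV ray_E \<and> NT ray_E \<and> NS ray_E \<and> degS ray_E"
proof (intro conjI)
  show "graph UNIV ray_E" unfolding graph_def ray_E_def by auto
  show "NT ray_E" unfolding NT_def ray_E_def by auto
  show "NS ray_E" unfolding NS_def ray_E_def by auto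
  show "degS ray_E"
    by (rule deg2_degS[of _ "\<lambda>i. i + 1" "\<lambda>i. i - 1"]) (auto simp: nbrs_def ray_E_def)
qed

lemma line_model: "graph UNIV line_E \<and> NT line_E \<and> NS line_E \<and> degS line_E"
proof (intro conjI)
  show "graph UNIV line_E" unfolding graph_def line_E_def by auto
  show "NT line_E" unfolding NT_def line_E_def by auto
  show "NS line_E" unfolding NS_def line_E_def by auto
  show "degS line_E"
    by (rule deg2_degS[of _ "\<lambda>i. i + 1" "\<lambda>i. i - 1"]) (auto simp: nbrs_def line_E_def)
qed

lemma cycle_model: assumes "n \<ge> 5"
  shows "graph {..<n} (cycle_E n) \<and> NT (cycle_E n) \<and> NS (cycle_E n) \<and> degS (cycle_E n)"
proof (intro conjI)
  show "graph {..<n} (cycle_E n)" unfolding graph_def cycle_E_def by auto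
  show "NT (cycle_E n)" unfolding NT_def cycle_E_alt using assms by (auto split: if_splits)
  show "NS (cycle_E n)" unfolding NS_def cycle_E_alt using assms by (auto split: if_splits)
  show "degS (cycle_E n)"
    by (rule deg2_degS[of _ "\<lambda>i. if i + 1 = n then 0 else i + 1" "\<lambda>i. if i = 0 then n - 1 else i - 1"])
      (auto simp: nbrs_def cycle_E_alt split: if_splits)
qed

lemma star_model: "graph {..<n} (star_E n) \<and> NT (star_E n) \<and> NS (star_E n) \<and> degS (star_E n)"
proof (intro conjI)
  show "graph {..<n} (star_E n)" unfolding graph_def star_E_def by auto
  show "NT (star_E n)" unfolding NT_def star_E_def by auto
  show "NS (star_E n)" unfolding NS_def star_E_def by auto
  have leaf: "nbrs (star_E n) j = {0}" if "j \<noteq> 0" "j < n" for j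
    using that by (auto simp: nbrs_def star_E_def)
  show "degS (star_E n)" unfolding degS_def
  proof (intro allI impI)
    fix x y assume "star_E n x y"
    then have "(x = 0 \<and> y \<noteq> 0 \<and> y < n) \<or> (y = 0 \<and> x \<noteq> 0 \<and> x < n)" by (auto simp: star_E_def)
    then show "card (nbrs (star_E n) x) = 1 \<or> card (nbrs (star_E n) y) = 1 \<or>
      (card (nbrs (star_E n) x) = 2 \<and> card (nbrs (star_E n) y) = 2)" using leaf by auto
  qed
qed


fun nbt :: "('a \<Rightarrow> 'a \<Rightarrow> bool) \<Rightarrow> 'a \<Rightarrow> 'a \<Rightarrow> nat \<Rightarrow> 'a" where
  "nbt E u v 0 = u"
| "nbt E u v (Suc 0) = v"
| "nbt E u v (Suc (Suc k)) = (SOME w. E (nbt E u v (Suc k)) w \<and> w \<noteq> nbt E u v k)"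

definition good :: "('a \<Rightarrow> 'a \<Rightarrow> bool) \<Rightarrow> (nat \<Rightarrow> 'a) \<Rightarrow> nat \<Rightarrow> bool" where
  "good E p k \<longleftrightarrow> (\<forall>m<k. E (p m) (p (Suc m))) \<and> (\<forall>m. Suc (Suc m) \<le> k \<longrightarrow> p (Suc (Suc m)) \<noteq> p m)"

lemma good_mono: "good E p k \<Longrightarrow> j \<le> k \<Longrightarrow> good E p j"
  unfolding good_def by auto

lemma two_elem:
  assumes "finite A" "card A \<le> 2" "a \<in> A" "b \<in> A" "a \<noteq> b"
  shows "A = {a, b}"
proof -
  have sub: "{a, b} \<subseteq> A" using assms by auto
  have "card {a, b} = 2" using assms(5) by simp
  then show ?thesis using card_subset_eq[OF assms(1) sub] assms(2) card_mono[OF assms(1) sub] by simp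
qed

lemma one_elem:
  assumes "card A = 1" "a \<in> A"
  shows "A = {a}"
  using assms by (metis card_1_singletonE singletonD)

lemma exists_other:
  assumes "card A = 2" shows "\<exists>w\<in>A. w \<noteq> z"
proof -
  obtain a b where "A = {a, b}" "a \<noteq> b" using assms card_2_iff by metis
  then show ?thesis by auto
qed

context lgraph
begin

lemma closed_all:
  assumes u: "u \<in> S" "u \<in> V" and cl: "\<And>x. x \<in> S \<Longrightarrow> nbrs E x \<subseteq> S"
    and CN: "connected_graph V E"
  shows "V \<subseteq> S"
proof
  fix v assume v: "v \<in> V"
  obtain xs where xs: "walk E xs" "hd xs = u" "last xs = v" using CN u v unfolding connected_graph_def by blast
  have ne: "xs \<noteq> []" using xs(1) by (simp add: walk_def)
  have "\<forall>i<length xs. xs ! i \<in> S"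
  proof (intro allI impI)
    fix i assume "i < length xs"
    then show "xs ! i \<in> S"
    proof (induction i)
      case 0 then show ?case using xs(2) u ne by (simp add: hd_conv_nth[symmetric])
    next
      case (Suc i)
      then have "xs ! i \<in> S" by simp
      moreover have "E (xs ! i) (xs ! Suc i)" using xs(1) Suc.prems unfolding walk_def by blast
      ultimately have "xs ! Suc i \<in> nbrs E (xs ! i)" "nbrs E (xs ! i) \<subseteq> S" using cl by auto
      then show ?case by blast
    qed
  qed
  moreover have "length xs - 1 < length xs" using ne by simp
  ultimately show "v \<in> S" using xs(3) ne by (metis last_conv_nth)
qed

lemma iso_param:
  fixes p :: "'i \<Rightarrow> 'a"
  assumes inj: "inj_on p I" and sub: "p ` I \<subseteq> V" and i0: "i0 \<in> I"
    and nb: "\<And>i. i \<in> I \<Longrightarrow> nbrs E (p i) = p ` {j\<in>I. R i j}"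
    and CN: "connected_graph V E"
  shows "graph_iso V E I R"
proof -
  have "V \<subseteq> p ` I"
    by (rule closed_all[of "p i0"]) (use i0 sub nb CN in auto)
  then have VI: "p ` I = V" using sub by blast
  then have bij: "bij_betw p I V" using inj by (simp add: bij_betw_def)
  define f where "f = inv_into I p"
  have bf: "bij_betw f V I" unfolding f_def by (rule bij_betw_inv_into[OF bij])
  have fI: "x \<in> V \<Longrightarrow> f x \<in> I" for x using bf bij_betwE by blast
  have pf: "x \<in> V \<Longrightarrow> p (f x) = x" for x unfolding f_def using VI f_inv_into_f by metis
  have "E x y \<longleftrightarrow> R (f x) (f y)" if x: "x \<in> V" and y: "y \<in> V" for x y
  proof -
    have "E x y \<longleftrightarrow> y \<in> nbrs E (p (f x))" using pf[OF x] by simp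
    also have "\<dots> \<longleftrightarrow> p (f y) \<in> p ` {j\<in>I. R (f x) j}" using nb[OF fI[OF x]] pf[OF y] by simp
    also have "\<dots> \<longleftrightarrow> f y \<in> {j\<in>I. R (f x) j}"
      by (rule inj_on_image_mem_iff[OF inj]) (use fI[OF y] in auto)
    also have "\<dots> \<longleftrightarrow> R (f x) (f y)" using fI[OF y] by simp
    finally show ?thesis .
  qed
  then show ?thesis unfolding graph_iso_def using bf by blast
qed

lemma nbt_good:
  assumes uv: "E u v" and deg: "\<And>m. 1 \<le> m \<Longrightarrow> m < k \<Longrightarrow> card (nbrs E (nbt E u v m)) = 2"
  shows "good E (nbt E u v) k"
  using deg
proof (induction k)
  case 0 then show ?case by (simp add: good_def)
next
  case (Suc k)
  let ?p = "nbt E u v"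
  have IH: "good E ?p k" using Suc by simp
  show ?case
  proof (cases k)
    case 0 then show ?thesis using uv by (simp add: good_def)
  next
    case (Suc k')
    have c2: "card (nbrs E (?p (Suc k'))) = 2" using Suc.prems[of "Suc k'"] Suc by simp
    then obtain w where w: "E (?p (Suc k')) w" "w \<noteq> ?p k'" using exists_other[OF c2, of "?p k'"] by auto
    have sm: "E (?p (Suc k')) (?p (Suc (Suc k'))) \<and> ?p (Suc (Suc k')) \<noteq> ?p k'"
      unfolding nbt.simps(3) by (rule someI[of _ w]) (use w in blast)
    show ?thesis using IH sm Suc unfolding good_def
      by (auto simp: less_Suc_eq le_Suc_eq)
  qed
qed

lemma good_V:
  assumes "good E p k" "p 0 \<in> V" "m \<le> k" shows "p m \<in> V"
  using assms(3)
proof (induction m)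
  case 0 then show ?case using assms(2) by simp
next
  case (Suc m)
  then have "E (p m) (p (Suc m))" using assms(1) unfolding good_def by simp
  then show ?case using graphD[OF G] by blast
qed

lemma good_nbrs2:
  assumes gd: "good E p k" and i: "1 \<le> i" "i < k" and c: "card (nbrs E (p i)) = 2"
  shows "nbrs E (p i) = {p (i - 1), p (Suc i)}"
proof -
  have e1: "E (p (i - 1)) (p i)" using gd i unfolding good_def by (metis Suc_diff_1 less_imp_diff_less zero_less_one le_less_trans less_le_trans)
  have e2: "E (p i) (p (Suc i))" using gd i unfolding good_def by blast
  have ne: "p (i - 1) \<noteq> p (Suc i)"
  proof -
    have "Suc (Suc (i - 1)) \<le> k" using i by simp
    then have "p (Suc (Suc (i - 1))) \<noteq> p (i - 1)" using gd unfolding good_def by blast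
    then show ?thesis using i by simp
  qed
  show ?thesis by (rule two_elem) (use fin[OF e2] c sym[OF e1] e2 ne in auto)
qed

lemma first_rep:
  assumes gd: "good E p k" and deg: "\<And>m. 1 \<le> m \<Longrightarrow> m < k \<Longrightarrow> card (nbrs E (p m)) = 2"
    and jk: "j \<le> k" and inj: "inj_on p {..<j}" and ij: "i < j" and eq: "p j = p i"
  shows "i = 0 \<and> card (nbrs E (p 0)) \<noteq> 1"
proof -
  have Ej: "E (p (j - 1)) (p j)" using gd ij jk unfolding good_def
    by (metis Suc_diff_1 diff_less le_less_trans less_le_trans zero_less_one le0 not_less)
  have jne: "j \<noteq> Suc i"
  proof
    assume "j = Suc i" then have "E (p i) (p i)" using Ej eq by simp
    then show False using irr by blast
  qed
  have i0: "i = 0"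
  proof (rule ccontr)
    assume "i \<noteq> 0"
    then have i1: "1 \<le> i" by simp
    have nb: "nbrs E (p i) = {p (i - 1), p (Suc i)}"
      using good_nbrs2[OF gd i1] deg[OF i1] ij jk by simp
    have "p (j - 1) \<in> nbrs E (p i)" using Ej eq sym by simp
    then have "p (j - 1) = p (i - 1) \<or> p (j - 1) = p (Suc i)" using nb by simp
    then show False
    proof
      assume h: "p (j - 1) = p (i - 1)"
      have "j - 1 = i - 1" using inj_onD[OF inj h] ij by simp
      then show False using ij i1 by simp
    next
      assume h: "p (j - 1) = p (Suc i)"
      have "Suc i < j" using ij jne by simp
      then have "j - 1 = Suc i" using inj_onD[OF inj h] by simp
      then have "j = Suc (Suc i)" by simp
      then show False using gd jk eq unfolding good_def by blast
    qed
  qed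
  moreover have "card (nbrs E (p 0)) \<noteq> 1"
  proof
    assume c1: "card (nbrs E (p 0)) = 1"
    have k0: "0 < k" using ij jk by simp
    have "E (p 0) (p 1)" using gd k0 unfolding good_def by simp
    then have nb: "nbrs E (p 0) = {p 1}" using one_elem[OF c1] by simp
    have "p (j - 1) \<in> nbrs E (p 0)" using Ej eq i0 sym by simp
    then have h: "p (j - 1) = p 1" using nb by simp
    have "1 < j" using ij jne i0 by simp
    then have "j - 1 = 1" using inj_onD[OF inj h] by simp
    then have "j = Suc (Suc 0)" by simp
    then show False using gd jk eq i0 unfolding good_def by blast
  qed
  ultimately show ?thesis by simp
qed

lemma leaf_inj:
  assumes gd: "good E p k" and deg: "\<And>m. 1 \<le> m \<Longrightarrow> m < k \<Longrightarrow> card (nbrs E (p m)) = 2"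
    and c1: "card (nbrs E (p 0)) = 1"
  shows "inj_on p {..k}"
proof -
  have "j \<le> Suc k \<Longrightarrow> inj_on p {..<j}" for j
  proof (induction j)
    case 0 then show ?case by simp
  next
    case (Suc j)
    then have ij: "inj_on p {..<j}" by simp
    have "p j \<notin> p ` {..<j}"
    proof
      assume "p j \<in> p ` {..<j}"
      then obtain i where i: "i < j" "p j = p i" by auto
      have "i = 0 \<and> card (nbrs E (p 0)) \<noteq> 1"
        by (rule first_rep[OF gd deg _ ij i]) (use Suc.prems in auto)
      then show False using c1 by simp
    qed
    then show ?case using ij by (simp add: lessThan_Suc)
  qed
  then show ?thesis by (simp add: lessThan_Suc_atMost[symmetric])
qed

end


context lgraph
begin

lemma star_case:
  assumes CN: "connected_graph V E" and ds: "degS E" and v: "v \<in> V" and c3: "card (nbrs E v) \<ge> 3"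
  shows "\<exists>n\<ge>3. graph_iso V E {..<n} (star_E n)"
proof -
  define N where "N = nbrs E v"
  define k where "k = card N"
  have fN: "finite N" using LF v unfolding locally_finite_def N_def by blast
  have leaf: "nbrs E u = {v}" if u: "u \<in> N" for u
  proof -
    have vu: "E v u" using u by (simp add: N_def)
    have "card (nbrs E v) = 1 \<or> card (nbrs E u) = 1 \<or> (card (nbrs E v) = 2 \<and> card (nbrs E u) = 2)"
      using ds vu unfolding degS_def by blast
    then have "card (nbrs E u) = 1" using c3 by auto
    then show ?thesis using one_elem[of "nbrs E u" v] sym[OF vu] by simp
  qed
  obtain g where g: "bij_betw g {0..<k} N" using ex_bij_betw_nat_finite[OF fN] unfolding k_def by blast
  have gN: "m < k \<Longrightarrow> g m \<in> N" for m using bij_betwE[OF g] by simp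
  have ginj: "inj_on g {0..<k}" using bij_betw_imp_inj_on[OF g] .
  have gimg: "g ` {0..<k} = N" using bij_betw_imp_surj_on[OF g] .
  have vN: "v \<notin> N" using irr[of v v] by (auto simp: N_def)
  define p where "p i = (if i = 0 then v else g (i - 1))" for i
  have inj: "inj_on p {..<Suc k}"
  proof (rule inj_onI)
    fix i j assume i: "i \<in> {..<Suc k}" and j: "j \<in> {..<Suc k}" and e: "p i = p j"
    show "i = j"
    proof (cases "i = 0"; cases "j = 0")
      assume "i \<noteq> 0" "j \<noteq> 0"
      then have "g (i - 1) = g (j - 1)" using e by (simp add: p_def)
      then have "i - 1 = j - 1" using inj_onD[OF ginj] i j \<open>i \<noteq> 0\<close> \<open>j \<noteq> 0\<close> by auto
      then show ?thesis using \<open>i \<noteq> 0\<close> \<open>j \<noteq> 0\<close> by simp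
    next
      assume "i = 0" "j \<noteq> 0"
      then have "v = g (j - 1)" using e by (simp add: p_def)
      then show ?thesis using gN[of "j - 1"] j \<open>j \<noteq> 0\<close> vN by auto
    next
      assume "i \<noteq> 0" "j = 0"
      then have "v = g (i - 1)" using e by (simp add: p_def)
      then show ?thesis using gN[of "i - 1"] i \<open>i \<noteq> 0\<close> vN by auto
    qed simp
  qed
  have NV: "N \<subseteq> V" using graphD[OF G] by (auto simp: N_def)
  have sub: "p ` {..<Suc k} \<subseteq> V" using v NV gN by (auto simp: p_def)
  have nb: "nbrs E (p i) = p ` {j\<in>{..<Suc k}. star_E (Suc k) i j}" if i: "i \<in> {..<Suc k}" for i
  proof (cases "i = 0")
    case True
    have "p ` {j\<in>{..<Suc k}. star_E (Suc k) i j} = N"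
    proof
      show "p ` {j\<in>{..<Suc k}. star_E (Suc k) i j} \<subseteq> N"
        using True gN by (auto simp: star_E_def p_def)
    next
      show "N \<subseteq> p ` {j\<in>{..<Suc k}. star_E (Suc k) i j}"
      proof
        fix w assume "w \<in> N"
        then obtain m where m: "m < k" "w = g m" using gimg by auto
        then have "p (Suc m) = w" by (simp add: p_def)
        moreover have "Suc m \<in> {j\<in>{..<Suc k}. star_E (Suc k) i j}" using m True by (simp add: star_E_def)
        ultimately show "w \<in> p ` {j\<in>{..<Suc k}. star_E (Suc k) i j}" by blast
      qed
    qed
    then show ?thesis using True by (simp add: p_def N_def)
  next
    case False
    have "{j\<in>{..<Suc k}. star_E (Suc k) i j} = {0}" using False i by (auto simp: star_E_def)
    moreover have "nbrs E (p i) = {v}" using leaf gN[of "i - 1"] False i by (simp add: p_def)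
    ultimately show ?thesis by (simp add: p_def)
  qed
  have "graph_iso V E {..<Suc k} (star_E (Suc k))"
    by (rule iso_param[OF inj sub _ nb CN]) auto
  moreover have "Suc k \<ge> 3" using c3 k_def N_def by simp
  ultimately show ?thesis by blast
qed

end


context lgraph
begin

lemma card12: "w \<in> V \<Longrightarrow> card (nbrs E w) \<ge> 1"
proof -
  assume w: "w \<in> V"
  have "finite (nbrs E w)" using LF w unfolding locally_finite_def by blast
  moreover have "nbrs E w \<noteq> {}" using NE w by blast
  ultimately show ?thesis by (metis One_nat_def Suc_leI card_gt_0_iff)
qed

lemma leaf_case:
  assumes CN: "connected_graph V E" and dg: "\<forall>w\<in>V. card (nbrs E w) \<le> 2"
    and u0: "u0 \<in> V" and c1: "card (nbrs E u0) = 1"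
  shows "(\<exists>n\<ge>2. graph_iso V E {..<n} (path_E n)) \<or> graph_iso V E (UNIV :: nat set) ray_E"
proof -
  obtain u1 where N0: "nbrs E u0 = {u1}" using c1 by (rule card_1_singletonE)
  have e01: "E u0 u1" using N0 by (metis in_nbrs insertI1)
  define p where "p = nbt E u0 u1"
  have p0: "p 0 = u0" and p1: "p 1 = u1" by (simp_all add: p_def)
  have c1': "card (nbrs E (p 0)) = 1" using c1 p0 by simp
  show ?thesis
  proof (cases "\<exists>k. 1 \<le> k \<and> card (nbrs E (p k)) \<noteq> 2")
    case True
    define n where "n = (LEAST k. 1 \<le> k \<and> card (nbrs E (p k)) \<noteq> 2)"
    have nP: "1 \<le> n \<and> card (nbrs E (p n)) \<noteq> 2" unfolding n_def using True by (rule LeastI_ex)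
    have deg: "card (nbrs E (p m)) = 2" if "1 \<le> m" "m < n" for m
      using not_less_Least[of m "\<lambda>k. 1 \<le> k \<and> card (nbrs E (p k)) \<noteq> 2"] that unfolding n_def by blast
    have gd: "good E p n" unfolding p_def by (rule nbt_good[OF e01]) (use deg p_def in auto)
    have pV: "m \<le> n \<Longrightarrow> p m \<in> V" for m using good_V[OF gd] p0 u0 by simp
    have cn: "card (nbrs E (p n)) = 1" using card12[OF pV[of n]] dg pV[of n] nP by force
    have inj: "inj_on p {..n}" by (rule leaf_inj[OF gd deg c1'])
    have n1: "1 \<le> n" using nP by simp
    have nb: "nbrs E (p i) = p ` {j\<in>{..<Suc n}. path_E (Suc n) i j}" if i: "i \<in> {..<Suc n}" for i
    proof -
      consider "i = 0" | "i = n" "i \<noteq> 0" | "0 < i" "i < n" using i by fastforce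
      then show ?thesis
      proof cases
        case 1
        have "E (p 0) (p 1)" using gd n1 unfolding good_def by simp
        then have "nbrs E (p 0) = {p 1}" using one_elem[OF c1'] by simp
        moreover have "{j\<in>{..<Suc n}. path_E (Suc n) i j} = {1}" using 1 n1 by (auto simp: path_E_def)
        ultimately show ?thesis using 1 by simp
      next
        case 2
        have "n - 1 < n" using n1 by simp
        then have "E (p (n - 1)) (p (Suc (n - 1)))" using gd unfolding good_def by blast
        then have "E (p n) (p (n - 1))" using n1 sym by simp
        then have "nbrs E (p n) = {p (n - 1)}" using one_elem[OF cn] by simp
        moreover have "{j\<in>{..<Suc n}. path_E (Suc n) i j} = {n - 1}" using 2 n1 by (auto simp: path_E_def)
        ultimately show ?thesis using 2 by simp
      next
        case 3
        have "nbrs E (p i) = {p (i - 1), p (Suc i)}"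
          by (rule good_nbrs2[OF gd]) (use 3 deg in auto)
        moreover have "{j\<in>{..<Suc n}. path_E (Suc n) i j} = {i - 1, Suc i}" using 3 by (auto simp: path_E_def)
        ultimately show ?thesis by simp
      qed
    qed
    have inj': "inj_on p {..<Suc n}" using inj by (simp add: lessThan_Suc_atMost)
    have sub: "p ` {..<Suc n} \<subseteq> V" using pV by auto
    have "graph_iso V E {..<Suc n} (path_E (Suc n))"
      by (rule iso_param[OF inj' sub _ nb CN]) auto
    moreover have "Suc n \<ge> 2" using n1 by simp
    ultimately show ?thesis by blast
  next
    case False
    then have deg: "card (nbrs E (p m)) = 2" if "1 \<le> m" for m using that by blast
    have gd: "good E p k" for k unfolding p_def by (rule nbt_good[OF e01]) (use deg p_def in auto)
    have pV: "p m \<in> V" for m using good_V[OF gd] p0 u0 by blast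
    have inj: "inj_on p UNIV"
    proof (rule inj_onI)
      fix i j assume "p i = p j"
      moreover have "inj_on p {..max i j}" by (rule leaf_inj[OF gd deg c1'])
      ultimately show "i = j" by (auto dest: inj_onD)
    qed
    have nb: "nbrs E (p i) = p ` {j\<in>UNIV. ray_E i j}" if i: "i \<in> UNIV" for i
    proof (cases "i = 0")
      case True
      have "E (p 0) (p 1)" using gd[of 1] unfolding good_def by simp
      then have "nbrs E (p 0) = {p 1}" using one_elem[OF c1'] by simp
      moreover have "{j\<in>UNIV. ray_E i j} = {1}" using True by (auto simp: ray_E_def)
      ultimately show ?thesis using True by simp
    next
      case False
      have "nbrs E (p i) = {p (i - 1), p (Suc i)}"
        by (rule good_nbrs2[OF gd[of "Suc i"]]) (use False deg in auto)
      moreover have "{j\<in>UNIV. ray_E i j} = {i - 1, Suc i}" using False by (auto simp: ray_E_def)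
      ultimately show ?thesis by simp
    qed
    have "graph_iso V E UNIV ray_E"
      by (rule iso_param[OF inj _ _ nb CN]) (use pV in auto)
    then show ?thesis by blast
  qed
qed

end


context lgraph
begin

lemma cycle_idx:
  assumes "3 \<le> n" "i < n"
  shows "{m\<in>{..<n}. cycle_E n i m} = {if i = 0 then n - 1 else i - 1, if Suc i = n then 0 else Suc i}"
  using assms by (auto simp: cycle_E_alt split: if_splits)

lemma cyc_case:
  assumes CN: "connected_graph V E" and nt: "NT E" and ns: "NS E"
    and d2: "\<forall>w\<in>V. card (nbrs E w) = 2"
    and gd: "\<And>k. good E p k" and pV: "\<And>m. p m \<in> V" and ninj: "\<not> inj p"
  shows "\<exists>n\<ge>5. graph_iso V E {..<n} (cycle_E n)"
proof -
  have deg: "\<And>m. card (nbrs E (p m)) = 2" using d2 pV by blast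
  have ex: "\<exists>j i. i < j \<and> p i = p j"
  proof -
    obtain x y where "x \<noteq> y" "p x = p y" using ninj unfolding inj_def by blast
    then show ?thesis by (metis linorder_neqE_nat)
  qed
  define j0 where "j0 = (LEAST j. \<exists>i<j. p i = p j)"
  obtain i0 where i0: "i0 < j0" "p i0 = p j0" using LeastI_ex[OF ex] unfolding j0_def by blast
  have injj: "inj_on p {..<j0}"
  proof (rule inj_onI)
    fix a b assume a: "a \<in> {..<j0}" and b: "b \<in> {..<j0}" and e: "p a = p b"
    show "a = b"
    proof (rule ccontr)
      assume "a \<noteq> b"
      then consider "a < b" | "b < a" by linarith
      then show False
      proof cases
        case 1
        then have "\<exists>i<b. p i = p b" using e by blast
        then have "j0 \<le> b" unfolding j0_def by (rule Least_le)
        then show False using b by simp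
      next
        case 2
        then have "\<exists>i<a. p i = p a" using e by metis
        then have "j0 \<le> a" unfolding j0_def by (rule Least_le)
        then show False using a by simp
      qed
    qed
  qed
  have "i0 = 0 \<and> card (nbrs E (p 0)) \<noteq> 1"
    by (rule first_rep[OF gd[of j0] deg _ injj i0(1) i0(2)[symmetric]]) simp_all
  then have pj: "p j0 = p 0" using i0 by simp
  have g: "\<And>m. E (p m) (p (Suc m))" "\<And>m. p (Suc (Suc m)) \<noteq> p m"
    using gd unfolding good_def by (metis lessI le_refl)+
  have j1: "j0 \<noteq> 1"
  proof
    assume "j0 = 1"
    then have "E (p 0) (p 0)" using g(1)[of 0] pj by simp
    then show False using irr by blast
  qed
  have j2: "j0 \<noteq> 2" using g(2)[of 0] pj by (auto simp: numeral_2_eq_2)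
  have j3: "j0 \<noteq> 3"
  proof
    assume "j0 = 3"
    then have "p (Suc (Suc (Suc 0))) = p 0" using pj by (simp add: numeral_3_eq_3)
    then have e3: "E (p (Suc (Suc 0))) (p 0)" using g(1)[of "Suc (Suc 0)"] by simp
    show False using nt[unfolded NT_def, rule_format, OF g(1)[of 0] g(1)[of "Suc 0"] e3] .
  qed
  have j4: "j0 \<noteq> 4"
  proof
    assume "j0 = 4"
    then have "p (Suc (Suc (Suc (Suc 0)))) = p 0" using pj by (simp add: numeral_eq_Suc)
    then have e4: "E (p (Suc (Suc (Suc 0)))) (p 0)" using g(1)[of "Suc (Suc (Suc 0))"] by simp
    have n1: "p 0 \<noteq> p (Suc (Suc 0))" using g(2)[of 0] by auto
    have n2: "p (Suc 0) \<noteq> p (Suc (Suc (Suc 0)))" using g(2)[of "Suc 0"] by auto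
    show False using ns[unfolded NS_def, rule_format, OF g(1)[of 0] g(1)[of "Suc 0"] g(1)[of "Suc (Suc 0)"] e4 n1 n2] .
  qed
  have j5: "j0 \<ge> 5" using i0 j1 j2 j3 j4 by linarith
  have nb: "nbrs E (p i) = p ` {m\<in>{..<j0}. cycle_E j0 i m}" if i: "i \<in> {..<j0}" for i
  proof -
    have idx: "{m\<in>{..<j0}. cycle_E j0 i m} = {if i = 0 then j0 - 1 else i - 1, if Suc i = j0 then 0 else Suc i}"
      by (rule cycle_idx) (use j5 i in auto)
    show ?thesis
    proof (cases "i = 0")
      case True
      have e1: "E (p 0) (p 1)" using g(1)[of 0] by simp
      have "E (p (j0 - 1)) (p (Suc (j0 - 1)))" using g(1) by blast
      then have e2: "E (p 0) (p (j0 - 1))" using pj j5 sym by simp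
      have ne: "p (j0 - 1) \<noteq> p 1"
      proof
        assume "p (j0 - 1) = p 1"
        then have "j0 - 1 = 1" using inj_onD[OF injj] j5 by simp
        then show False using j5 by simp
      qed
      have "nbrs E (p 0) = {p (j0 - 1), p 1}"
        by (rule two_elem) (use fin[OF e1] deg e1 e2 ne in auto)
      then show ?thesis using idx True j5 by simp
    next
      case False
      have "nbrs E (p i) = {p (i - 1), p (Suc i)}"
        by (rule good_nbrs2[OF gd[of "Suc i"]]) (use False deg in auto)
      moreover have "p (if Suc i = j0 then 0 else Suc i) = p (Suc i)" using pj by simp
      ultimately show ?thesis using idx False by simp
    qed
  qed
  have "graph_iso V E {..<j0} (cycle_E j0)"
    by (rule iso_param[OF injj _ _ nb CN, of 0]) (use pV j5 in auto)
  then show ?thesis using j5 by blast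
qed

end


context lgraph
begin

lemma nbt_goodall:
  assumes d2: "\<forall>w\<in>V. card (nbrs E w) = 2" and v0: "v0 \<in> V" and e: "E v0 a"
  shows "good E (nbt E v0 a) k"
proof (induction k)
  case 0 then show ?case by (simp add: good_def)
next
  case (Suc k)
  have "nbt E v0 a m \<in> V" if "m \<le> k" for m using good_V[OF Suc.IH] v0 that by simp
  then show ?case by (intro nbt_good[OF e]) (use d2 in auto)
qed

lemma inf_inj:
  assumes CN: "connected_graph V E" and nt: "NT E" and ns: "NS E"
    and d2: "\<forall>w\<in>V. card (nbrs E w) = 2" and inf: "infinite V"
    and gd: "\<And>k. good E p k" and pV: "\<And>m. p m \<in> V"
  shows "inj p"
proof (rule ccontr)
  assume "\<not> inj p"
  then obtain n where "graph_iso V E {..<n} (cycle_E n)" using cyc_case[OF CN nt ns d2 gd pV] by blast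
  then obtain f where "bij_betw f V {..<n}" unfolding graph_iso_def by blast
  then have "finite V" using bij_betw_finite by blast
  then show False using inf by simp
qed

lemma deg2_case:
  assumes CN: "connected_graph V E" and nt: "NT E" and ns: "NS E"
    and d2: "\<forall>w\<in>V. card (nbrs E w) = 2"
  shows "(\<exists>n\<ge>5. graph_iso V E {..<n} (cycle_E n)) \<or> graph_iso V E (UNIV :: int set) line_E"
proof -
  obtain v0 where v0: "v0 \<in> V" using CN unfolding connected_graph_def by blast
  obtain a b where ab: "nbrs E v0 = {a, b}" "a \<noteq> b" using d2 v0 card_2_iff by metis
  have ea: "E v0 a" and eb: "E v0 b" using ab(1) by (metis in_nbrs insertI1 insertI2 singletonI)+
  define s where "s = nbt E v0 a"
  define t where "t = nbt E v0 b"
  have gs: "good E s k" for k unfolding s_def by (rule nbt_goodall[OF d2 v0 ea])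
  have gt: "good E t k" for k unfolding t_def by (rule nbt_goodall[OF d2 v0 eb])
  have sV: "s m \<in> V" for m using good_V[OF gs[of m], of m] v0 by (simp add: s_def)
  have tV: "t m \<in> V" for m using good_V[OF gt[of m], of m] v0 by (simp add: t_def)
  have s0: "s 0 = v0" "s 1 = a" and t0: "t 0 = v0" "t 1 = b" by (simp_all add: s_def t_def)
  have gs1: "E (s m) (s (Suc m))" "s (Suc (Suc m)) \<noteq> s m" for m
    using gs[of "Suc (Suc m)"] unfolding good_def by auto
  have gt1: "E (t m) (t (Suc m))" "t (Suc (Suc m)) \<noteq> t m" for m
    using gt[of "Suc (Suc m)"] unfolding good_def by auto
  show ?thesis
  proof (cases "inj s")
    case False
    then show ?thesis using cyc_case[OF CN nt ns d2 gs sV] by blast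
  next
    case True
    have inf: "infinite V"
    proof
      assume "finite V"
      moreover have "range s \<subseteq> V" using sV by auto
      ultimately have "finite (range s)" using finite_subset by blast
      then show False using True range_inj_infinite by blast
    qed
    have injt: "inj t" by (rule inf_inj[OF CN nt ns d2 inf gt tV])
    have cross: "s i \<noteq> t k" if i: "1 \<le> i" and k: "1 \<le> k" for i k
    proof
      assume st: "s i = t k"
      define w where "w m = (if m \<le> k then t (k - m) else s (m - k))" for m
      have w1: "w m = t (k - m)" if "m \<le> k" for m using that by (simp add: w_def)
      have w2: "w m = s (m - k)" if "k \<le> m" for m
        using that s0 t0 by (cases "m = k") (simp_all add: w_def)
      have ew: "E (w m) (w (Suc m))" for m
      proof (cases "m < k")
        case True
        define r where "r = k - Suc m"
        have r: "k - m = Suc r" "k - Suc m = r" using True by (simp_all add: r_def)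
        then show ?thesis using w1[of m] w1[of "Suc m"] True sym[OF gt1(1)[of r]] by simp
      next
        case False
        then show ?thesis using w2[of m] w2[of "Suc m"] gs1(1)[of "m - k"] by (simp add: Suc_diff_le)
      qed
      have nw: "w (Suc (Suc m)) \<noteq> w m" for m
      proof -
        consider "Suc (Suc m) \<le> k" | "Suc m = k" | "k \<le> m" by linarith
        then show ?thesis
        proof cases
          case 1
          define r where "r = k - Suc (Suc m)"
          have r: "k - m = Suc (Suc r)" "k - Suc (Suc m) = r" using 1 by (simp_all add: r_def)
          have "w m = t (Suc (Suc r))" "w (Suc (Suc m)) = t r" using w1[of m] w1[of "Suc (Suc m)"] 1 r by simp_all
          then show ?thesis using gt1(2)[of r] by simp
        next
          case 2
          then have "w m = b" "w (Suc (Suc m)) = a" using w1[of m] w2[of "Suc (Suc m)"] s0 t0 by auto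
          then show ?thesis using ab(2) by simp
        next
          case 3
          then show ?thesis using w2[of m] w2[of "Suc (Suc m)"] gs1(2)[of "m - k"] by (simp add: Suc_diff_le)
        qed
      qed
      have gw: "good E w n" for n unfolding good_def using ew nw by blast
      have wV: "w m \<in> V" for m unfolding w_def using sV tV by simp
      have iw: "inj w" by (rule inf_inj[OF CN nt ns d2 inf gw wV])
      have "w 0 = w (k + i)" using w1[of 0] w2[of "k + i"] st by simp
      then have "0 = k + i" using injD[OF iw] by blast
      then show False using i by simp
    qed
    define g where "g z = (if 0 \<le> z then s (nat z) else t (nat (- z)))" for z :: int
    have injg: "inj g"
    proof (rule injI)
      fix x y assume e: "g x = g y"
      have injs: "inj s" by (rule True)
      show "x = y"
      proof (cases "0 \<le> x"; cases "0 \<le> y")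
        assume xy: "0 \<le> x" "0 \<le> y"
        then have "s (nat x) = s (nat y)" using e by (simp add: g_def)
        then have "nat x = nat y" using injD[OF injs] by blast
        then show ?thesis using xy by simp
      next
        assume xy: "\<not> 0 \<le> x" "\<not> 0 \<le> y"
        then have "t (nat (- x)) = t (nat (- y))" using e by (simp add: g_def)
        then have "nat (- x) = nat (- y)" using injD[OF injt] by blast
        then show ?thesis using xy by simp
      next
        assume x: "0 \<le> x" and y: "\<not> 0 \<le> y"
        then have e': "s (nat x) = t (nat (- y))" using e by (simp add: g_def)
        have ny: "1 \<le> nat (- y)" using y by simp
        show ?thesis
        proof (cases "x = 0")
          case True
          then have "t 0 = t (nat (- y))" using e' s0 t0 by simp
          then have "0 = nat (- y)" using injD[OF injt] by blast
          then show ?thesis using ny by simp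
        next
          case False
          then have "1 \<le> nat x" using x by simp
          then show ?thesis using cross ny e' by blast
        qed
      next
        assume y: "0 \<le> y" and x: "\<not> 0 \<le> x"
        then have e': "s (nat y) = t (nat (- x))" using e by (simp add: g_def)
        have nx: "1 \<le> nat (- x)" using x by simp
        show ?thesis
        proof (cases "y = 0")
          case True
          then have "t 0 = t (nat (- x))" using e' s0 t0 by simp
          then have "0 = nat (- x)" using injD[OF injt] by blast
          then show ?thesis using nx by simp
        next
          case False
          then have "1 \<le> nat y" using y by simp
          then show ?thesis using cross nx e' by blast
        qed
      qed
    qed
    have nbs: "nbrs E (s m) = {s (m - 1), s (Suc m)}" if "1 \<le> m" for m
      by (rule good_nbrs2[OF gs[of "Suc m"]]) (use that d2 sV in auto)
    have nbt': "nbrs E (t m) = {t (m - 1), t (Suc m)}" if "1 \<le> m" for m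
      by (rule good_nbrs2[OF gt[of "Suc m"]]) (use that d2 tV in auto)
    have nb: "nbrs E (g z) = g ` {w\<in>UNIV. line_E z w}" if "z \<in> UNIV" for z
    proof -
      have idx: "{w\<in>UNIV. line_E z w} = {z - 1, z + 1}" by (auto simp: line_E_def)
      consider "0 < z" | "z = 0" | "z < 0" by linarith
      then have "nbrs E (g z) = {g (z - 1), g (z + 1)}"
      proof cases
        case 1
        have a1: "g z = s (nat z)" "g (z - 1) = s (nat z - 1)" "g (z + 1) = s (Suc (nat z))"
          using 1 by (simp_all add: g_def nat_diff_distrib' nat_add_distrib)
        show ?thesis using nbs[of "nat z"] 1 a1 by simp
      next
        case 2
        have "g 0 = v0" "g (-1) = b" "g 1 = a" using s0 t0 by (simp_all add: g_def)
        then show ?thesis using 2 ab(1) by auto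
      next
        case 3
        have nn: "nat (- (z - 1)) = Suc (nat (- z))" using 3 by arith
        have a1: "g z = t (nat (- z))" "g (z - 1) = t (Suc (nat (- z)))"
          using 3 nn by (simp_all add: g_def)
        have a2: "g (z + 1) = t (nat (- z) - 1)"
        proof (cases "z = -1")
          case True then show ?thesis using s0 t0 by (simp add: g_def)
        next
          case False
          then have "z + 1 < 0" using 3 by simp
          then show ?thesis by (simp add: g_def nat_diff_distrib')
        qed
        show ?thesis using nbt'[of "nat (- z)"] 3 a1 a2 by (simp add: insert_commute)
      qed
      then show ?thesis using idx by simp
    qed
    have "graph_iso V E UNIV line_E"
    proof (rule iso_param[OF _ _ _ nb CN, of 0])
      show "inj_on g UNIV" using injg .
      show "g ` UNIV \<subseteq> V" using sV tV by (auto simp: g_def)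
    qed simp
    then show ?thesis by blast
  qed
qed

end


theorem corollary3p4:
  fixes V :: "'a set" and E :: "'a \<Rightarrow> 'a \<Rightarrow> bool"
  assumes "graph V E" and "locally_finite V E" and "connected_graph V E"
    and "\<forall>v\<in>V. nbrs E v \<noteq> {}"
  shows "(ricci_flat V E \<and> girth V E \<ge> 5) \<longleftrightarrow>
     ((\<exists>n\<ge>2. graph_iso V E {..<n} (path_E n)) \<or>
      graph_iso V E (UNIV :: nat set) ray_E \<or>
      graph_iso V E (UNIV :: int set) line_E \<or>
      (\<exists>n\<ge>5. graph_iso V E {..<n} (cycle_E n)) \<or>
      (\<exists>n\<ge>3. graph_iso V E {..<n} (star_E n)))"
proof -
  interpret lgraph V E using assms(1,2,4) by unfold_locales
  have gc: "girth V E \<ge> 5 \<longleftrightarrow> NT E \<and> NS E" by (rule girth_char[OF assms(1)])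
  show ?thesis
  proof
    assume h: "ricci_flat V E \<and> girth V E \<ge> 5"
    then have nt: "NT E" and ns: "NS E" using gc by blast+
    have ds: "degS E" using local_char[OF nt ns] h by blast
    show "(\<exists>n\<ge>2. graph_iso V E {..<n} (path_E n)) \<or>
      graph_iso V E (UNIV :: nat set) ray_E \<or>
      graph_iso V E (UNIV :: int set) line_E \<or>
      (\<exists>n\<ge>5. graph_iso V E {..<n} (cycle_E n)) \<or>
      (\<exists>n\<ge>3. graph_iso V E {..<n} (star_E n))"
    proof (cases "\<exists>v\<in>V. card (nbrs E v) \<ge> 3")
      case True
      then obtain v where "v \<in> V" "card (nbrs E v) \<ge> 3" by blast
      then show ?thesis using star_case[OF assms(3) ds] by blast
    next
      case False
      then have dg: "\<forall>w\<in>V. card (nbrs E w) \<le> 2" by force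
      show ?thesis
      proof (cases "\<exists>u\<in>V. card (nbrs E u) = 1")
        case True
        then obtain u where "u \<in> V" "card (nbrs E u) = 1" by blast
        then show ?thesis using leaf_case[OF assms(3) dg] by blast
      next
        case False
        then have "\<forall>w\<in>V. card (nbrs E w) = 2" using dg card12 by force
        then show ?thesis using deg2_case[OF assms(3) nt ns] by blast
      qed
    qed
  next
    assume h: "(\<exists>n\<ge>2. graph_iso V E {..<n} (path_E n)) \<or>
      graph_iso V E (UNIV :: nat set) ray_E \<or>
      graph_iso V E (UNIV :: int set) line_E \<or>
      (\<exists>n\<ge>5. graph_iso V E {..<n} (cycle_E n)) \<or>
      (\<exists>n\<ge>3. graph_iso V E {..<n} (star_E n))"
    have "degS E \<and> NT E \<and> NS E"
      using h
    proof (elim disjE exE conjE)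
      fix n assume "graph_iso V E {..<n} (path_E n)"
      then show ?thesis using iso_transfer[OF _ assms(1)] path_model by blast
    next
      assume "graph_iso V E (UNIV :: nat set) ray_E"
      then show ?thesis using iso_transfer[OF _ assms(1)] ray_model by blast
    next
      assume "graph_iso V E (UNIV :: int set) line_E"
      then show ?thesis using iso_transfer[OF _ assms(1)] line_model by blast
    next
      fix n assume "n \<ge> 5" "graph_iso V E {..<n} (cycle_E n)"
      then show ?thesis using iso_transfer[OF _ assms(1)] cycle_model by blast
    next
      fix n assume "graph_iso V E {..<n} (star_E n)"
      then show ?thesis using iso_transfer[OF _ assms(1)] star_model by blast
    qed
    then show "ricci_flat V E \<and> girth V E \<ge> 5" using local_char gc by blast
  qed
qed


end
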